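(* Let $(\bm M_s)$ be a sequence of parameters with $\bm M_s\in\mathcal M$ for every index $s$. Then for every $t$ and every $k=1,\dots,2H$, $$\|\Phi^x_k(\bm M_{t-H:t-1})\|_2\le\kappa^2(1-\gamma)^{k-1}\mathds1_{(k\le H)}+\phi H(1-\gamma)^{k-2}\mathds1_{(k\ge2)},$$ $$\|\Phi^u_k(\bm M_{t-H:t})\|_2\le\kappa^3(1-\gamma)^{k-1}\mathds1_{(k\le H)}(2\sqrt{nm}+1)+\kappa\phi H(1-\gamma)^{k-2}\mathds1_{(k\ge2)},$$ where $\phi=2\kappa^5\kappa_B\sqrt{mn}$.
   Context: $A\in\mathbb R^{n\times n}$, $B\in\mathbb R^{n\times m}$; matrix $\|\cdot\|_\infty$ = max absolute row sum, $\|\cdot\|_2$ spectral norm. For $\kappa\ge1$, $\gamma\in(0,1]$, $K$ is $(\kappa,\gamma)$-strongly stable if $A-BK=Q^{-1}LQ$ with $\|L\|_2\le1-\gamma$ and $\max(\|Q\|_2,\|Q^{-1}\|_2,\|K\|_2)\le\kappa$; $\kappa_B=\max(\|B\|_2,1)$. Fix a $(\kappa,\gamma)$-strongly stable $\mathbb K$, $A_{\mathbb K}=A-B\mathbb K$, and $H\ge1$. A parameter is a list $\bm M=(M^{[1]},\dots,M^{[H]})$, $M^{[i]}\in\mathbb R^{m\times n}$; $\mathcal M=\{\bm M:\|M^{[i]}\|_\infty\le2\sqrt n\kappa^3(1-\gamma)^{i-1},\ 1\le i\le H\}$. For a time-indexed sequence of parameters, $\Phi^x_k(\bm M_{t-H:t-1})=A_{\mathbb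 K}^{k-1}\mathds1_{(k\le H)}+\sum_{i=1}^HA_{\mathbb K}^{i-1}BM_{t-i}^{[k-i]}\mathds1_{(1\le k-i\le H)}$ and $\Phi^u_k(\bm M_{t-H:t})=M_t^{[k]}\mathds1_{(k\le H)}-\mathbb K\Phi^x_k(\bm M_{t-H:t-1})$; $\mathds1_{(\cdot)}$ is the indicator (terms with indicator $0$ are omitted). *)

theory Defs
  imports "HOL-Analysis.Analysis"
begin

definition spec_norm :: "real^'c^'r \<Rightarrow> real" where
  "spec_norm A = onorm (\<lambda>x. A *v x)"

definition inf_norm :: "real^'c^'r \<Rightarrow> real" where
  "inf_norm A = Max (range (\<lambda>i. \<Sum>j\<in>UNIV. \<bar>A $ i $ j\<bar>))"

definition mat_pow :: "real^'n^'n \<Rightarrow> nat \<Rightarrow> real^'n^'n" where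
  "mat_pow A k = (((**) A) ^^ k) (mat 1)"

definition strongly_stable ::
  "real \<Rightarrow> real \<Rightarrow> real^'n^'n \<Rightarrow> real^'m^'n \<Rightarrow> real^'n^'m \<Rightarrow> bool" where
  "strongly_stable \<kappa> \<gamma> A B K \<longleftrightarrow>
     (\<exists>Q L :: real^'n^'n. invertible Q \<and> A - B ** K = matrix_inv Q ** L ** Q \<and>
        spec_norm L \<le> 1 - \<gamma> \<and>
        spec_norm Q \<le> \<kappa> \<and> spec_norm (matrix_inv Q) \<le> \<kappa> \<and> spec_norm K \<le> \<kappa>)"

definition ind :: "bool \<Rightarrow> real" where
  "ind P = (if P then 1 else 0)"

text \<open>Parameters: \<open>Ms s i\<close> is \<open>M_s^{[i]}\<close> for \<open>1 \<le> i \<le> H\<close>; time indices are integers.\<close>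
definition in_Mset :: "real \<Rightarrow> real \<Rightarrow> nat \<Rightarrow> (nat \<Rightarrow> real^'n^'m) \<Rightarrow> bool" where
  "in_Mset \<kappa> \<gamma> H M \<longleftrightarrow>
     (\<forall>i\<in>{1..H}. inf_norm (M i) \<le> 2 * sqrt (real CARD('n)) * \<kappa>^3 * (1 - \<gamma>)^(i-1))"

definition Phi_x ::
  "real^'n^'n \<Rightarrow> real^'m^'n \<Rightarrow> nat \<Rightarrow> (int \<Rightarrow> nat \<Rightarrow> real^'n^'m) \<Rightarrow> int \<Rightarrow> nat \<Rightarrow> real^'n^'n" where
  "Phi_x AK B H Ms t k =
     (if k \<le> H then mat_pow AK (k-1) else 0) +
     (\<Sum>i\<in>{1..H}. if 1 \<le> k - i \<and> k - i \<le> H \<and> i < k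
                   then mat_pow AK (i-1) ** B ** Ms (t - int i) (k - i) else 0)"

definition Phi_u ::
  "real^'n^'n \<Rightarrow> real^'m^'n \<Rightarrow> real^'n^'m \<Rightarrow> nat \<Rightarrow> (int \<Rightarrow> nat \<Rightarrow> real^'n^'m) \<Rightarrow> int \<Rightarrow> nat \<Rightarrow> real^'n^'m" where
  "Phi_u AK B K H Ms t k =
     (if k \<le> H then Ms t k else 0) - K ** Phi_x AK B H Ms t k"

end

theory Submission
  imports Defs
begin

lemma sn_mv: "norm (A *v x) \<le> spec_norm A * norm x"
  unfolding spec_norm_def by (rule onorm) simp

lemma sn_le:
  fixes A :: "real^'c^'r"
  assumes "\<And>x. norm (A *v x) \<le> b * norm x"
  shows "spec_norm A \<le> b"
  unfolding spec_norm_def by (rule onorm_le) (rule assms)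

lemma sn_nonneg: "0 \<le> spec_norm A"
  unfolding spec_norm_def by (rule onorm_pos_le) simp

lemma sn_mult: "spec_norm (A ** B) \<le> spec_norm A * spec_norm B"
proof (rule sn_le)
  fix x
  have "norm ((A ** B) *v x) = norm (A *v (B *v x))" by (simp add: matrix_vector_mul_assoc)
  also have "\<dots> \<le> spec_norm A * norm (B *v x)" by (rule sn_mv)
  also have "\<dots> \<le> spec_norm A * (spec_norm B * norm x)"
    by (intro mult_left_mono sn_mv sn_nonneg)
  finally show "norm ((A ** B) *v x) \<le> spec_norm A * spec_norm B * norm x" by (simp add: mult.assoc)
qed

lemma sn_add: "spec_norm (A + B) \<le> spec_norm A + spec_norm B"
proof (rule sn_le)
  fix x
  have "norm ((A + B) *v x) \<le> norm (A *v x) + norm (B *v x)"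
    by (simp add: matrix_vector_mult_add_rdistrib norm_triangle_ineq)
  also have "\<dots> \<le> spec_norm A * norm x + spec_norm B * norm x" by (intro add_mono sn_mv)
  finally show "norm ((A + B) *v x) \<le> (spec_norm A + spec_norm B) * norm x" by (simp add: algebra_simps)
qed

lemma sn_diff: "spec_norm (A - B) \<le> spec_norm A + spec_norm B"
proof (rule sn_le)
  fix x
  have "norm ((A - B) *v x) \<le> norm (A *v x) + norm (B *v x)"
    by (simp add: matrix_vector_mult_diff_rdistrib norm_triangle_ineq4)
  also have "\<dots> \<le> spec_norm A * norm x + spec_norm B * norm x" by (intro add_mono sn_mv)
  finally show "norm ((A - B) *v x) \<le> (spec_norm A + spec_norm B) * norm x" by (simp add: algebra_simps)
qed

lemma sn_zero: "spec_norm (0::real^'c^'r) = 0"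
  by (rule antisym[OF sn_le sn_nonneg]) simp

lemma sn_id: "spec_norm (mat 1 :: real^'n^'n) \<le> 1"
  by (rule sn_le) simp

lemma sn_sum:
  fixes f :: "'i \<Rightarrow> real^'c^'r"
  shows "finite S \<Longrightarrow> spec_norm (sum f S) \<le> (\<Sum>s\<in>S. spec_norm (f s))"
proof (induction S rule: finite_induct)
  case empty then show ?case by (simp add: sn_zero)
next
  case (insert a S)
  then show ?case using sn_add[of "f a" "sum f S"] by simp
qed

lemma sn_inf:
  fixes M :: "real^'n^'m"
  shows "spec_norm M \<le> sqrt (real CARD('m)) * inf_norm M"
proof (rule sn_le)
  fix x :: "real^'n"
  have row: "(\<Sum>j\<in>UNIV. \<bar>M $ i $ j\<bar>) \<le> inf_norm M" for i
    unfolding inf_norm_def by (rule Max_ge) auto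
  have comp: "\<bar>(M *v x) $ i\<bar> \<le> inf_norm M * norm x" for i
  proof -
    have "\<bar>(M *v x) $ i\<bar> = \<bar>\<Sum>j\<in>UNIV. M $ i $ j * x $ j\<bar>"
      by (simp add: matrix_vector_mult_def)
    also have "\<dots> \<le> (\<Sum>j\<in>UNIV. \<bar>M $ i $ j\<bar> * \<bar>x $ j\<bar>)"
      by (rule order_trans[OF sum_abs]) (simp add: abs_mult)
    also have "\<dots> \<le> (\<Sum>j\<in>UNIV. \<bar>M $ i $ j\<bar> * norm x)"
      by (intro sum_mono mult_left_mono component_le_norm_cart) auto
    also have "\<dots> \<le> inf_norm M * norm x"
      using row[of i] by (simp add: sum_distrib_right[symmetric] mult_right_mono)
    finally show ?thesis .
  qed
  have inf0: "0 \<le> inf_norm M"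
    using row[of undefined] by (meson order_trans sum_nonneg abs_ge_zero)
  have "norm (M *v x) ^ 2 = (\<Sum>i\<in>UNIV. ((M *v x) $ i)^2)"
    by (simp add: norm_vec_def L2_set_def sum_nonneg)
  also have "\<dots> \<le> (\<Sum>i\<in>(UNIV::'m set). (inf_norm M * norm x)^2)"
  proof (rule sum_mono)
    fix i
    show "((M *v x) $ i)^2 \<le> (inf_norm M * norm x)^2"
      using comp[of i] by (metis abs_ge_zero power2_abs power_mono)
  qed
  also have "\<dots> = (sqrt (real CARD('m)) * inf_norm M * norm x)^2"
    by (simp add: power_mult_distrib)
  finally have "norm (M *v x) ^ 2 \<le> (sqrt (real CARD('m)) * inf_norm M * norm x)^2" .
  then show "norm (M *v x) \<le> sqrt (real CARD('m)) * inf_norm M * norm x"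
    by (rule power2_le_imp_le) (simp add: inf0)
qed

lemma mat_pow_Suc: "mat_pow A (Suc j) = A ** mat_pow A j"
  by (simp add: mat_pow_def)

lemma mat_pow_conj:
  fixes Q L :: "real^'n^'n"
  assumes "Q ** Qi = mat 1"
  shows "mat_pow (Qi ** L ** Q) (Suc j) = Qi ** mat_pow L (Suc j) ** Q"
proof (induction j)
  case 0 then show ?case by (simp add: mat_pow_def)
next
  case (Suc j)
  have "mat_pow (Qi ** L ** Q) (Suc (Suc j)) = (Qi ** L ** Q) ** (Qi ** mat_pow L (Suc j) ** Q)"
    using Suc by (simp add: mat_pow_Suc)
  also have "\<dots> = Qi ** L ** (Q ** Qi) ** mat_pow L (Suc j) ** Q"
    by (simp add: matrix_mul_assoc)
  also have "\<dots> = Qi ** mat_pow L (Suc (Suc j)) ** Q"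
    using assms by (simp add: matrix_mul_assoc mat_pow_Suc)
  finally show ?case .
qed

lemma sn_pow:
  fixes L :: "real^'n^'n"
  assumes "spec_norm L \<le> c"
  shows "spec_norm (mat_pow L j) \<le> c ^ j"
proof (induction j)
  case 0 then show ?case using sn_id by (simp add: mat_pow_def)
next
  case (Suc j)
  have "spec_norm (mat_pow L (Suc j)) \<le> spec_norm L * spec_norm (mat_pow L j)"
    unfolding mat_pow_Suc by (rule sn_mult)
  also have "\<dots> \<le> c * c ^ j"
    by (intro mult_mono assms Suc sn_nonneg) (use assms sn_nonneg[of L] in linarith)
  finally show ?case by simp
qed

lemma pow_bound:
  fixes A :: "real^'n^'n" and B :: "real^'m^'n" and K :: "real^'n^'m"
  assumes "\<kappa> \<ge> 1" "\<gamma> \<le> 1" "strongly_stable \<kappa> \<gamma> A B K"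
  shows "spec_norm (mat_pow (A - B ** K) j) \<le> \<kappa>^2 * (1 - \<gamma>)^j"
proof -
  obtain Q L :: "real^'n^'n" where inv: "invertible Q" and eq: "A - B ** K = matrix_inv Q ** L ** Q"
    and nL: "spec_norm L \<le> 1 - \<gamma>" and nQ: "spec_norm Q \<le> \<kappa>"
    and nQi: "spec_norm (matrix_inv Q) \<le> \<kappa>"
    using assms(3) unfolding strongly_stable_def by blast
  have QQ: "Q ** matrix_inv Q = mat 1"
    using inv unfolding invertible_def matrix_inv_def by (rule someI_ex[THEN conjunct1])
  show ?thesis
  proof (cases j)
    case 0
    then show ?thesis using sn_id[where 'n='n] assms(1,2)
      by (simp add: mat_pow_def) (smt (verit) one_le_power)
  next
    case (Suc j')
    have "spec_norm (mat_pow (A - B ** K) j) = spec_norm (matrix_inv Q ** mat_pow L j ** Q)"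
      unfolding eq Suc mat_pow_conj[OF QQ] ..
    also have "\<dots> \<le> spec_norm (matrix_inv Q) * spec_norm (mat_pow L j) * spec_norm Q"
      by (meson order_trans sn_mult mult_right_mono sn_nonneg)
    also have "\<dots> \<le> \<kappa> * (1 - \<gamma>)^j * \<kappa>"
      by (intro mult_mono sn_pow nL nQ nQi sn_nonneg mult_nonneg_nonneg zero_le_power)
         (use assms in auto)
    finally show ?thesis by (simp add: power2_eq_square mult_ac)
  qed
qed

theorem lemma13:
  fixes A :: "real^'n^'n" and B :: "real^'m^'n" and K :: "real^'n^'m"
    and \<kappa> \<gamma> :: real and H :: nat and Ms :: "int \<Rightarrow> nat \<Rightarrow> real^'n^'m"
  assumes "\<kappa> \<ge> 1" and "0 < \<gamma>" and "\<gamma> \<le> 1"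
    and "strongly_stable \<kappa> \<gamma> A B K"
    and "H \<ge> 1"
    and "\<forall>s. in_Mset \<kappa> \<gamma> H (Ms s)"
  shows "\<forall>t. \<forall>k\<in>{1..2*H}.
    (let \<kappa>B = max (spec_norm B) 1;
         \<phi> = 2 * \<kappa>^5 * \<kappa>B * sqrt (real CARD('m) * real CARD('n))
     in spec_norm (Phi_x (A - B ** K) B H Ms t k)
          \<le> \<kappa>^2 * (1 - \<gamma>)^(k-1) * ind (k \<le> H) + \<phi> * H * (1 - \<gamma>)^(k-2) * ind (k \<ge> 2)
      \<and> spec_norm (Phi_u (A - B ** K) B K H Ms t k)
          \<le> \<kappa>^3 * (1 - \<gamma>)^(k-1) * ind (k \<le> H) * (2 * sqrt (real CARD('n) * real CARD('m)) + 1)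
            + \<kappa> * \<phi> * H * (1 - \<gamma>)^(k-2) * ind (k \<ge> 2))"
proof (intro allI ballI)
  fix t :: int and k :: nat
  assume k: "k \<in> {1..2*H}"
  define c where "c = 1 - \<gamma>"
  define \<kappa>B where "\<kappa>B = max (spec_norm B) 1"
  define \<phi> where "\<phi> = 2 * \<kappa>^5 * \<kappa>B * sqrt (real CARD('m) * real CARD('n))"
  define AK where "AK = A - B ** K"
  have c0: "0 \<le> c" using assms unfolding c_def by simp
  have kap0: "0 \<le> \<kappa>" using assms by simp
  have sB: "spec_norm B \<le> \<kappa>B" unfolding \<kappa>B_def by simp
  have sK: "spec_norm K \<le> \<kappa>" using assms(4) unfolding strongly_stable_def by blast
  have AKp: "spec_norm (mat_pow AK j) \<le> \<kappa>^2 * c^j" for j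
    unfolding AK_def c_def by (rule pow_bound[OF assms(1,3,4)])
  have Mb: "spec_norm (Ms s j) \<le> sqrt (real CARD('m)) * (2 * sqrt (real CARD('n)) * \<kappa>^3 * c^(j-1))"
    if "j \<in> {1..H}" for s j
  proof -
    have "inf_norm (Ms s j) \<le> 2 * sqrt (real CARD('n)) * \<kappa>^3 * c^(j-1)"
      using assms(6) that unfolding in_Mset_def c_def by blast
    then show ?thesis using sn_inf[of "Ms s j"] by (meson order_trans mult_left_mono real_sqrt_ge_zero of_nat_0_le_iff)
  qed
  have first: "spec_norm (if k \<le> H then mat_pow AK (k-1) else 0) \<le> \<kappa>^2 * c^(k-1) * ind (k \<le> H)"
    using AKp[of "k-1"] by (simp add: ind_def sn_zero)
  have trm: "spec_norm (if 1 \<le> k - i \<and> k - i \<le> H \<and> i < k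
                   then mat_pow AK (i-1) ** B ** Ms (t - int i) (k - i) else 0)
        \<le> \<phi> * c^(k-2) * ind (k \<ge> 2)" if i: "i \<in> {1..H}" for i
  proof (cases "1 \<le> k - i \<and> k - i \<le> H \<and> i < k")
    case True
    then have k2: "k \<ge> 2" using i by auto
    have "spec_norm (mat_pow AK (i-1) ** B ** Ms (t - int i) (k - i))
        \<le> spec_norm (mat_pow AK (i-1)) * spec_norm B * spec_norm (Ms (t - int i) (k - i))"
      by (meson order_trans sn_mult mult_right_mono sn_nonneg)
    also have "\<dots> \<le> (\<kappa>^2 * c^(i-1)) * \<kappa>B * (sqrt (real CARD('m)) * (2 * sqrt (real CARD('n)) * \<kappa>^3 * c^(k-i-1)))"
      by (intro mult_mono AKp sB Mb sn_nonneg mult_nonneg_nonneg zero_le_power c0 kap0)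
        (use True in \<open>auto simp: \<kappa>B_def\<close>)
    also have "\<dots> = \<phi> * (c^(i-1) * c^(k-i-1))"
      unfolding \<phi>_def by (simp add: real_sqrt_mult power_add[symmetric] mult_ac numeral_eq_Suc)
    also have "c^(i-1) * c^(k-i-1) = c^(k-2)"
      unfolding power_add[symmetric] using True i by (intro arg_cong[where f="(^) c"]) auto
    finally show ?thesis using True k2 by (simp add: ind_def)
  next
    case False
    have "0 \<le> \<phi>" unfolding \<phi>_def \<kappa>B_def using kap0 by simp
    then show ?thesis using False c0 by (subst if_not_P[OF False]) (simp add: sn_zero ind_def)
  qed
  have PX: "spec_norm (Phi_x AK B H Ms t k) \<le> \<kappa>^2 * c^(k-1) * ind (k \<le> H) + \<phi> * H * c^(k-2) * ind (k \<ge> 2)"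
  proof -
    have "spec_norm (Phi_x AK B H Ms t k) \<le> \<kappa>^2 * c^(k-1) * ind (k \<le> H) + (\<Sum>i\<in>{1..H}. \<phi> * c^(k-2) * ind (k \<ge> 2))"
      unfolding Phi_x_def
      by (rule order_trans[OF sn_add add_mono[OF first order_trans[OF sn_sum sum_mono]]]) (use trm in auto)
    then show ?thesis by (simp add: mult_ac)
  qed
  have PU: "spec_norm (Phi_u AK B K H Ms t k) \<le> sqrt (real CARD('m)) * (2 * sqrt (real CARD('n)) * \<kappa>^3 * c^(k-1)) * ind (k \<le> H)
       + \<kappa> * (\<kappa>^2 * c^(k-1) * ind (k \<le> H) + \<phi> * H * c^(k-2) * ind (k \<ge> 2))"
    unfolding Phi_u_def
  proof (rule order_trans[OF sn_diff add_mono])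
    show "spec_norm (if k \<le> H then Ms t k else 0) \<le> sqrt (real CARD('m)) * (2 * sqrt (real CARD('n)) * \<kappa>^3 * c^(k-1)) * ind (k \<le> H)"
      using Mb[of k t] k by (simp add: ind_def sn_zero)
    show "spec_norm (K ** Phi_x AK B H Ms t k) \<le> \<kappa> * (\<kappa>^2 * c^(k-1) * ind (k \<le> H) + \<phi> * H * c^(k-2) * ind (k \<ge> 2))"
      by (rule order_trans[OF sn_mult mult_mono[OF sK PX]]) (use kap0 sn_nonneg in auto)
  qed
  have eq: "sqrt (real CARD('m)) * (2 * sqrt (real CARD('n)) * \<kappa>^3 * c^(k-1)) * ind (k \<le> H)
       + \<kappa> * (\<kappa>^2 * c^(k-1) * ind (k \<le> H) + \<phi> * H * c^(k-2) * ind (k \<ge> 2))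
     = \<kappa>^3 * c^(k-1) * ind (k \<le> H) * (2 * sqrt (real CARD('n) * real CARD('m)) + 1)
            + \<kappa> * \<phi> * H * c^(k-2) * ind (k \<ge> 2)"
    by (simp add: real_sqrt_mult algebra_simps power3_eq_cube power2_eq_square)
  show "let \<kappa>B = max (spec_norm B) 1;
         \<phi> = 2 * \<kappa>^5 * \<kappa>B * sqrt (real CARD('m) * real CARD('n))
     in spec_norm (Phi_x (A - B ** K) B H Ms t k)
          \<le> \<kappa>^2 * (1 - \<gamma>)^(k-1) * ind (k \<le> H) + \<phi> * H * (1 - \<gamma>)^(k-2) * ind (k \<ge> 2)
      \<and> spec_norm (Phi_u (A - B ** K) B K H Ms t k)
          \<le> \<kappa>^3 * (1 - \<gamma>)^(k-1) * ind (k \<le> H) * (2 * sqrt (real CARD('n) * real CARD('m)) + 1)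
            + \<kappa> * \<phi> * H * (1 - \<gamma>)^(k-2) * ind (k \<ge> 2)"
    unfolding Let_def using PX PU eq unfolding AK_def c_def \<phi>_def \<kappa>B_def by simp
qed

end
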